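(* For every dimension $n\geq 2$ there exists $C>0$ such that for any $0<a<e^{-1}$, $$\int_{\Delta_n\times\Delta_n}\frac{\mathbf{1}_{\{\mathbf{t}(r,s)\in Z_a\}}}{\sqrt{t_1(r,s)(1-t_{2n}(r,s))}}\prod_{i=2}^{2n}\frac{1}{t_i(r,s)-t_{i-1}(r,s)}\,dr\,ds\leq C|\log a|^{C}$$ and $$\int_{\Delta_n\times\Delta_n}\mathbf{1}_{\{\mathbf{t}(r,s)\notin Z_a\}}\,dr\,ds\leq Ca.$$
   Context: $\Delta_n=\{(r_1,\dots,r_n)\in[0,1]^n: r_1<\dots<r_n\}$ with Lebesgue measure. For $(r,s)\in\Delta_n\times\Delta_n$, $\mathbf{t}(r,s)=(t_1(r,s),\dots,t_{2n}(r,s))$ are the elements of $r\cup s$ in increasing order. $Z_a=\{(z_1,\dots,z_{2n}): z_1\geq a,\ 1-z_{2n}\geq a,\ z_j-z_{j-1}\geq a\ \forall 2\leq j\leq 2n\}$. *)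

theory Defs
  imports "HOL-Analysis.Analysis"
begin

text \<open>Points of [0,1]^n are functions on the index set {1..n}; the measure used is
  the product Lebesgue measure PiM {1..n} (\<lambda>_. lborel).\<close>

definition Delta :: "nat \<Rightarrow> (nat \<Rightarrow> real) set" where
  "Delta n = {r. (\<forall>i\<in>{1..n}. 0 \<le> r i \<and> r i \<le> 1) \<and> (\<forall>i\<in>{1..<n}. r i < r (Suc i))}"

definition tpts :: "nat \<Rightarrow> (nat \<Rightarrow> real) \<Rightarrow> (nat \<Rightarrow> real) \<Rightarrow> nat \<Rightarrow> real" where
  "tpts n r s j = sort (map r [1..<Suc n] @ map s [1..<Suc n]) ! (j - 1)"

definition Zset :: "nat \<Rightarrow> real \<Rightarrow> (nat \<Rightarrow> real) set" where
  "Zset n a = {z. z 1 \<ge> a \<and> 1 - z (2*n) \<ge> a \<and> (\<forall>j\<in>{2..2*n}. z j - z (j - 1) \<ge> a)}"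

end

theory Submission
  imports Defs
begin


lemma lower_meas:
  fixes f :: "'a \<Rightarrow> ennreal"
  shows "\<exists>G\<in>borel_measurable M. (\<forall>x. G x \<le> f x) \<and> integral\<^sup>N M G = integral\<^sup>N M f"
proof -
  let ?A = "integral\<^sup>S M ` {g. simple_function M g \<and> g \<le> f}"
  have "(\<lambda>_. 0) \<in> {g. simple_function M g \<and> g \<le> f}" by (auto simp: le_fun_def)
  then have "?A \<noteq> {}" by blast
  have "\<exists>s::nat\<Rightarrow>ennreal. incseq s \<and> range s \<subseteq> ?A \<and> Sup ?A = (SUP i. s i)"
    by (rule ennreal_Sup_countable_SUP) fact
  then obtain s :: "nat \<Rightarrow> ennreal" where s: "range s \<subseteq> ?A" "Sup ?A = (SUP i. s i)"
    by auto
  have "\<forall>i. \<exists>g. simple_function M g \<and> g \<le> f \<and> integral\<^sup>S M g = s i"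
  proof
    fix i
    have "s i \<in> ?A" using s(1) by auto
    then show "\<exists>g. simple_function M g \<and> g \<le> f \<and> integral\<^sup>S M g = s i" by auto
  qed
  then obtain g where g: "\<And>i. simple_function M (g i)" "\<And>i. g i \<le> f" "\<And>i. integral\<^sup>S M (g i) = s i"
    by metis
  define G where "G = (\<lambda>x. SUP i. g i x)"
  have Gm: "G \<in> borel_measurable M" unfolding G_def
    using g(1) by (intro borel_measurable_SUP) (auto intro: borel_measurable_simple_function)
  have Gf: "\<forall>x. G x \<le> f x" unfolding G_def using g(2) by (auto simp: le_fun_def intro: SUP_least)
  have "integral\<^sup>N M f = (SUP i. s i)" using s(2) by (simp add: nn_integral_def)
  also have "\<dots> \<le> integral\<^sup>N M G"
  proof (rule SUP_least)
    fix i
    have "s i = integral\<^sup>N M (g i)" using g by (simp add: nn_integral_eq_simple_integral)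
    also have "\<dots> \<le> integral\<^sup>N M G" unfolding G_def by (intro nn_integral_mono) (auto intro: SUP_upper)
    finally show "s i \<le> integral\<^sup>N M G" .
  qed
  finally have "integral\<^sup>N M f \<le> integral\<^sup>N M G" .
  moreover have "integral\<^sup>N M G \<le> integral\<^sup>N M f" using Gf by (intro nn_integral_mono) auto
  ultimately show ?thesis using Gm Gf by (intro bexI[of _ G]) auto
qed

definition ch :: "real \<Rightarrow> real list \<Rightarrow> real list" where "ch p zs = p # zs @ [1]"
definition gp :: "real \<Rightarrow> real list \<Rightarrow> nat \<Rightarrow> real" where
  "gp p zs i = ch p zs ! Suc i - ch p zs ! i"
definition chok :: "real \<Rightarrow> real \<Rightarrow> real list \<Rightarrow> bool" where
  "chok a p zs = (\<forall>i<Suc (length zs). a \<le> gp p zs i)"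
definition cw :: "real \<Rightarrow> real \<Rightarrow> real list \<Rightarrow> real" where
  "cw a p zs = (if chok a p zs then \<Prod>i<Suc (length zs). 1 / gp p zs i else 0)"

lemma gp_Nil: "gp p [] 0 = 1 - p" by (simp add: gp_def ch_def)
lemma gp_Cons0: "gp p (z#zs) 0 = z - p" by (simp add: gp_def ch_def)
lemma gp_ConsS: "gp p (z#zs) (Suc i) = gp z zs i" by (simp add: gp_def ch_def)

lemma chok_Nil[simp]: "chok a p [] \<longleftrightarrow> a \<le> 1 - p"
  by (simp add: chok_def gp_Nil)
lemma chok_Cons[simp]: "chok a p (z#zs) \<longleftrightarrow> a \<le> z - p \<and> chok a z zs"
  unfolding chok_def by (simp add: All_less_Suc2 gp_Cons0 gp_ConsS)

lemma cw_Nil[simp]: "cw a p [] = (if a \<le> 1 - p then 1 / (1 - p) else 0)"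
  by (simp add: cw_def gp_Nil)
lemma cw_Cons[simp]: "cw a p (z#zs) = (if a \<le> z - p then 1 / (z - p) * cw a z zs else 0)"
  unfolding cw_def by (simp add: prod.lessThan_Suc_shift gp_Cons0 gp_ConsS del: prod.lessThan_Suc)

lemma cw_nonneg: "0 < a \<Longrightarrow> 0 \<le> cw a p zs"
  by (induction zs arbitrary: p) auto

lemma cw_nz: "0 < a \<Longrightarrow> cw a p zs \<noteq> 0 \<Longrightarrow> p \<le> 1 - a"
proof (induction zs arbitrary: p)
  case Nil
  then show ?case by (auto split: if_splits)
next
  case (Cons z zs)
  then have "a \<le> z - p" "cw a z zs \<noteq> 0" by (auto split: if_splits)
  with Cons.IH[of z] Cons.prems show ?case by auto
qed

lemma cw_insort_meas: "(\<lambda>y. cw a p (insort y zs)) \<in> borel_measurable borel"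
proof (induction zs arbitrary: p)
  case Nil
  have "(\<lambda>y. cw a p (insort y [])) = (\<lambda>y. if a \<le> y - p then 1 / (y - p) * (if a \<le> 1 - y then 1 / (1 - y) else 0) else 0)"
    by (auto simp: fun_eq_iff)
  also have "\<dots> \<in> borel_measurable borel" by measurable
  finally show ?case .
next
  case (Cons z zs)
  have "(\<lambda>y. cw a p (insort y (z#zs))) = (\<lambda>y. if y \<le> z then
      (if a \<le> y - p then 1 / (y - p) * (if a \<le> z - y then 1 / (z - y) * cw a z zs else 0) else 0)
      else (if a \<le> z - p then 1 / (z - p) * cw a z (insort y zs) else 0))"
    by (auto simp: fun_eq_iff)
  also have "\<dots> \<in> borel_measurable borel"
    using Cons.IH[of z] by measurable
  finally show ?case .
qed

lemma G1:
  assumes a: "0 < a" and pq: "q - p \<le> 1"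
  shows "(\<integral>\<^sup>+y. ennreal (if a \<le> y - p \<and> a \<le> q - y then 1 / ((y - p) * (q - y)) else 0) \<partial>lborel)
     \<le> ennreal (2 * ln (1 / a) * (if a \<le> q - p then 1 / (q - p) else 0))"
proof (cases "2 * a \<le> q - p")
  case False
  have "(\<integral>\<^sup>+y. ennreal (if a \<le> y - p \<and> a \<le> q - y then 1 / ((y - p) * (q - y)) else 0) \<partial>lborel) = (\<integral>\<^sup>+(y::real). 0 \<partial>lborel)"
    using False by (intro nn_integral_cong) auto
  then show ?thesis by simp
next
  case True
  define F where "F y = (ln (y - p) - ln (q - y)) / (q - p)" for y
  define h where "h y = 1 / ((y - p) * (q - y))" for y
  have der: "(F has_vector_derivative h y) (at y within {p+a..q-a})" if y: "y \<in> {p+a..q-a}" for y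
  proof -
    have y1: "y - p > 0" "q - y > 0" using y a by auto
    have "(F has_real_derivative ((1 / (y - p) - (- 1) / (q - y)) / (q - p))) (at y)"
      unfolding F_def using y1
      by (auto intro!: derivative_eq_intros)
    moreover have "(1 / (y - p) - (- 1) / (q - y)) / (q - p) = h y"
    proof -
      have e1: "1 / (y - p) - (- 1) / (q - y) = (q - p) / ((y - p) * (q - y))"
        using y1 by (simp add: field_simps)
      have "q - p > 0" using True a by simp
      then show ?thesis unfolding e1 h_def by simp
    qed
    ultimately show ?thesis
      by (simp add: has_real_derivative_iff_has_vector_derivative[symmetric] has_field_derivative_at_within)
  qed
  have int: "(h has_integral (F (q - a) - F (p + a))) {p+a..q-a}"
    using True a by (intro fundamental_theorem_of_calculus der) auto
  have F1: "F (q - a) = (ln (q - p - a) - ln a) / (q - p)" unfolding F_def by (simp add: algebra_simps)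
  have F2: "F (p + a) = (ln a - ln (q - p - a)) / (q - p)" unfolding F_def by (simp add: algebra_simps)
  have val: "F (q - a) - F (p + a) = 2 * (ln (q - p - a) - ln a) / (q - p)"
    unfolding F1 F2 diff_divide_distrib[symmetric] by (simp add: algebra_simps)
  have "ln (q - p - a) \<le> 0" using True a pq by simp
  then have "2 * (ln (q - p - a) - ln a) \<le> 2 * (- ln a)" by simp
  then have "2 * (ln (q - p - a) - ln a) / (q - p) \<le> 2 * (- ln a) / (q - p)"
    using True a by (intro divide_right_mono) auto
  moreover have "ln (1 / a) = - ln a" using a by (simp add: ln_div)
  ultimately have le: "F (q - a) - F (p + a) \<le> 2 * ln (1 / a) * (1 / (q - p))"
    unfolding val by simp
  have "(\<integral>\<^sup>+y. ennreal (if a \<le> y - p \<and> a \<le> q - y then 1 / ((y - p) * (q - y)) else 0) \<partial>lborel)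
      = (\<integral>\<^sup>+y. ennreal (h y) * indicator {p+a..q-a} y \<partial>lborel)"
    by (intro nn_integral_cong) (auto simp: h_def indicator_def)
  also have "\<dots> = ennreal (F (q - a) - F (p + a))"
  proof (rule nn_integral_has_integral_lebesgue'[OF _ int])
    fix y assume "y \<in> {p+a..q-a}" then show "0 \<le> h y" using a by (auto simp: h_def)
  qed
  also have "\<dots> \<le> ennreal (2 * ln (1 / a) * (if a \<le> q - p then 1 / (q - p) else 0))"
    using le True a by (intro ennreal_leI) auto
  finally show ?thesis .
qed

lemma cw_insort_int:
  assumes a: "0 < a" "a \<le> 1" and p: "0 \<le> p"
  shows "(\<integral>\<^sup>+y. ennreal (cw a p (insort y zs)) \<partial>lborel)
           \<le> ennreal (2 * real (Suc (length zs)) * ln (1 / a) * cw a p zs)"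
  using p
proof (induction zs arbitrary: p)
  case Nil
  have "(\<integral>\<^sup>+y. ennreal (cw a p (insort y [])) \<partial>lborel)
     = (\<integral>\<^sup>+y. ennreal (if a \<le> y - p \<and> a \<le> 1 - y then 1 / ((y - p) * (1 - y)) else 0) \<partial>lborel)"
    by (intro nn_integral_cong) auto
  also have "\<dots> \<le> ennreal (2 * ln (1 / a) * (if a \<le> 1 - p then 1 / (1 - p) else 0))"
    using Nil a by (intro G1) auto
  finally show ?case by simp
next
  case (Cons z zs)
  define c1 where "c1 = cw a z zs"
  define c2 where "c2 = (if a \<le> z - p then 1 / (z - p) else 0)"
  define h1 where "h1 y = (if a \<le> y - p \<and> a \<le> z - y then 1 / ((y - p) * (z - y)) else 0)" for y
  have c1: "0 \<le> c1" unfolding c1_def using cw_nonneg a by auto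
  have c2: "0 \<le> c2" unfolding c2_def using a by auto
  have h1: "0 \<le> h1 y" for y unfolding h1_def using a by auto
  have L: "0 \<le> ln (1 / a)" using a by simp
  have pw: "ennreal (cw a p (insort y (z # zs))) \<le> ennreal (h1 y) * ennreal c1 + ennreal c2 * ennreal (cw a z (insort y zs))" for y
  proof (cases "y \<le> z")
    case True
    then have "cw a p (insort y (z # zs)) = h1 y * c1" unfolding h1_def c1_def by auto
    then show ?thesis using h1 c1 by (simp add: ennreal_mult)
  next
    case False
    then have "cw a p (insort y (z # zs)) = c2 * cw a z (insort y zs)" unfolding c2_def by auto
    then show ?thesis using c2 cw_nonneg[OF a(1)] by (simp add: ennreal_mult)
  qed
  have m1: "(\<lambda>y. ennreal (h1 y)) \<in> borel_measurable borel" unfolding h1_def by measurable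
  have m2: "(\<lambda>y. ennreal (cw a z (insort y zs))) \<in> borel_measurable borel"
    using cw_insort_meas[of a z zs] by measurable
  have "(\<integral>\<^sup>+y. ennreal (cw a p (insort y (z # zs))) \<partial>lborel)
     \<le> (\<integral>\<^sup>+y. ennreal (h1 y) * ennreal c1 + ennreal c2 * ennreal (cw a z (insort y zs)) \<partial>lborel)"
    using pw by (intro nn_integral_mono) auto
  also have "\<dots> = (\<integral>\<^sup>+y. ennreal (h1 y) \<partial>lborel) * ennreal c1 + ennreal c2 * (\<integral>\<^sup>+y. ennreal (cw a z (insort y zs)) \<partial>lborel)"
    using m1 m2 by (simp add: nn_integral_add nn_integral_multc nn_integral_cmult)
  also have "\<dots> \<le> ennreal (2 * ln (1 / a) * c2) * ennreal c1 + ennreal c2 * ennreal (2 * real (Suc (length zs)) * ln (1 / a) * c1)"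
  proof (intro add_mono)
    show "(\<integral>\<^sup>+y. ennreal (h1 y) \<partial>lborel) * ennreal c1 \<le> ennreal (2 * ln (1 / a) * c2) * ennreal c1"
    proof (cases "c1 = 0")
      case False
      then have "z \<le> 1 - a" unfolding c1_def using cw_nz a by blast
      then have "(\<integral>\<^sup>+y. ennreal (h1 y) \<partial>lborel) \<le> ennreal (2 * ln (1 / a) * c2)"
        unfolding h1_def c2_def using a Cons.prems by (intro G1) auto
      then show ?thesis by (intro mult_right_mono) auto
    qed simp
    show "ennreal c2 * (\<integral>\<^sup>+y. ennreal (cw a z (insort y zs)) \<partial>lborel) \<le> ennreal c2 * ennreal (2 * real (Suc (length zs)) * ln (1 / a) * c1)"
    proof (cases "a \<le> z - p")
      case True
      then have "0 \<le> z" using a Cons.prems by auto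
      from Cons.IH[OF this] show ?thesis unfolding c1_def by (intro mult_left_mono) auto
    next
      case False
      then show ?thesis unfolding c2_def by simp
    qed
  qed
  also have "\<dots> = ennreal (2 * real (Suc (length (z # zs))) * ln (1 / a) * cw a p (z # zs))"
  proof -
    have "cw a p (z # zs) = c2 * c1" unfolding c1_def c2_def by simp
    moreover have "2 * ln (1 / a) * c2 * c1 + c2 * (2 * real (Suc (length zs)) * ln (1 / a) * c1)
        = 2 * real (Suc (length (z # zs))) * ln (1 / a) * (c2 * c1)" by (simp add: algebra_simps)
    ultimately show ?thesis using c1 c2 L
      by (simp add: ennreal_mult[symmetric] ennreal_plus[symmetric] del: ennreal_plus)
  qed
  finally show ?case .
qed

lemma lower_pair:
  assumes N: "sigma_finite_measure N"
  shows "integral\<^sup>N (M \<Otimes>\<^sub>M N) f \<le> (\<integral>\<^sup>+x. \<integral>\<^sup>+y. f (x, y) \<partial>N \<partial>M)"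
proof -
  obtain G where G: "G \<in> borel_measurable (M \<Otimes>\<^sub>M N)" "\<And>z. G z \<le> f z"
    "integral\<^sup>N (M \<Otimes>\<^sub>M N) G = integral\<^sup>N (M \<Otimes>\<^sub>M N) f"
    using lower_meas[of "M \<Otimes>\<^sub>M N" f] by blast
  have "integral\<^sup>N (M \<Otimes>\<^sub>M N) f = (\<integral>\<^sup>+x. \<integral>\<^sup>+y. G (x, y) \<partial>N \<partial>M)"
    using G(3) sigma_finite_measure.nn_integral_fst[OF N G(1)] by simp
  also have "\<dots> \<le> (\<integral>\<^sup>+x. \<integral>\<^sup>+y. f (x, y) \<partial>N \<partial>M)"
    using G(2) by (intro nn_integral_mono) auto
  finally show ?thesis .
qed

lemma lower_insert:
  assumes I: "finite I" "i \<notin> I"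
  shows "integral\<^sup>N (Pi\<^sub>M (insert i I) (\<lambda>_. lborel :: real measure)) f
     \<le> (\<integral>\<^sup>+x. (\<integral>\<^sup>+y. f (x(i := y)) \<partial>lborel) \<partial>(Pi\<^sub>M I (\<lambda>_. lborel)))"
proof -
  interpret product_sigma_finite "\<lambda>_. lborel :: real measure" by standard
  obtain G where G: "G \<in> borel_measurable (Pi\<^sub>M (insert i I) (\<lambda>_. lborel :: real measure))" "\<And>z. G z \<le> f z"
    "integral\<^sup>N (Pi\<^sub>M (insert i I) (\<lambda>_. lborel :: real measure)) G = integral\<^sup>N (Pi\<^sub>M (insert i I) (\<lambda>_. lborel :: real measure)) f"
    using lower_meas[of "Pi\<^sub>M (insert i I) (\<lambda>_. lborel :: real measure)" f] by blast
  have "integral\<^sup>N (Pi\<^sub>M (insert i I) (\<lambda>_. lborel :: real measure)) f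
     = (\<integral>\<^sup>+x. (\<integral>\<^sup>+y. G (x(i := y)) \<partial>lborel) \<partial>(Pi\<^sub>M I (\<lambda>_. lborel)))"
    using G(3) product_nn_integral_insert[OF I G(1)] by simp
  also have "\<dots> \<le> (\<integral>\<^sup>+x. (\<integral>\<^sup>+y. f (x(i := y)) \<partial>lborel) \<partial>(Pi\<^sub>M I (\<lambda>_. lborel)))"
    using G(2) by (intro nn_integral_mono) auto
  finally show ?thesis .
qed

fun lst :: "nat \<Rightarrow> (nat \<Rightarrow> real) \<Rightarrow> real list" where
  "lst 0 x = []"
| "lst (Suc k) x = x (Suc k) # lst k x"

lemma lst_upd: "k < i \<Longrightarrow> lst k (x(i := y)) = lst k x"
  by (induction k) auto

lemma length_lst[simp]: "length (lst k x) = k"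
  by (induction k) auto

lemma mset_lst: "mset (lst k x) = mset (map x [1..<Suc k])"
  by (induction k) auto

definition V :: "real \<Rightarrow> real \<Rightarrow> nat \<Rightarrow> real list \<Rightarrow> ennreal" where
  "V a K M xs = ennreal (cw a 0 (sort xs) * K ^ (M - length xs))"

lemma V_step:
  assumes a: "0 < a" "a \<le> 1" and K: "2 * real M * ln (1 / a) \<le> K" and len: "length xs < M"
  shows "(\<integral>\<^sup>+y. V a K M (y # xs) \<partial>lborel) \<le> V a K M xs"
proof -
  have L: "0 \<le> ln (1 / a)" using a by simp
  have K0: "0 \<le> K" using K L by (metis of_nat_0_le_iff mult_nonneg_nonneg order_trans zero_le_numeral)
  have e: "M - length xs = Suc (M - Suc (length xs))" using len by simp
  have "(\<integral>\<^sup>+y. V a K M (y # xs) \<partial>lborel)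
      = (\<integral>\<^sup>+y. ennreal (cw a 0 (insort y (sort xs))) * ennreal (K ^ (M - Suc (length xs))) \<partial>lborel)"
    unfolding V_def using K0 cw_nonneg[OF a(1)] by (intro nn_integral_cong) (simp add: ennreal_mult)
  also have "\<dots> = (\<integral>\<^sup>+y. ennreal (cw a 0 (insort y (sort xs))) \<partial>lborel) * ennreal (K ^ (M - Suc (length xs)))"
    using cw_insort_meas[of a 0 "sort xs"] by (simp add: nn_integral_multc)
  also have "\<dots> \<le> ennreal (2 * real (Suc (length xs)) * ln (1 / a) * cw a 0 (sort xs)) * ennreal (K ^ (M - Suc (length xs)))"
    using cw_insort_int[OF a, of 0 "sort xs"] by (intro mult_right_mono) auto
  also have "\<dots> \<le> V a K M xs"
  proof -
    have "2 * real (Suc (length xs)) * ln (1 / a) \<le> K"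
      using K L len by (smt (verit) mult_right_mono of_nat_le_iff Suc_leI mult_left_mono)
    then have "2 * real (Suc (length xs)) * ln (1 / a) * cw a 0 (sort xs) * K ^ (M - Suc (length xs))
        \<le> K * cw a 0 (sort xs) * K ^ (M - Suc (length xs))"
      using cw_nonneg[OF a(1)] K0 by (intro mult_right_mono) auto
    also have "\<dots> = cw a 0 (sort xs) * K ^ (M - length xs)" unfolding e by simp
    finally show ?thesis unfolding V_def using L cw_nonneg[OF a(1)] K0
      by (subst ennreal_mult[symmetric]) (auto intro!: ennreal_leI)
  qed
  finally show ?thesis .
qed

lemma V_PiM:
  assumes a: "0 < a" "a \<le> 1" and K: "2 * real M * ln (1 / a) \<le> K"
  shows "length L + k \<le> M \<Longrightarrow> (\<integral>\<^sup>+x. V a K M (lst k x @ L) \<partial>(Pi\<^sub>M {1..k} (\<lambda>_. lborel))) \<le> V a K M L"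
proof (induction k)
  case 0
  then show ?case by (simp add: PiM_empty nn_integral_count_space_finite)
next
  case (Suc k)
  have eq: "{1..Suc k} = insert (Suc k) {1..k}" by auto
  have "(\<integral>\<^sup>+x. V a K M (lst (Suc k) x @ L) \<partial>(Pi\<^sub>M {1..Suc k} (\<lambda>_. lborel)))
      \<le> (\<integral>\<^sup>+x. (\<integral>\<^sup>+y. V a K M (lst (Suc k) (x(Suc k := y)) @ L) \<partial>lborel) \<partial>(Pi\<^sub>M {1..k} (\<lambda>_. lborel)))"
    unfolding eq by (rule lower_insert) auto
  also have "\<dots> = (\<integral>\<^sup>+x. (\<integral>\<^sup>+y. V a K M (y # (lst k x @ L)) \<partial>lborel) \<partial>(Pi\<^sub>M {1..k} (\<lambda>_. lborel)))"
    by (simp add: lst_upd)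
  also have "\<dots> \<le> (\<integral>\<^sup>+x. V a K M (lst k x @ L) \<partial>(Pi\<^sub>M {1..k} (\<lambda>_. lborel)))"
    using Suc.prems by (intro nn_integral_mono V_step[OF a K]) auto
  also have "\<dots> \<le> V a K M L" using Suc by auto
  finally show ?case .
qed

lemma gp_val: "i \<le> length zs \<Longrightarrow>
   gp p zs i = (if i = length zs then 1 else zs ! i) - (if i = 0 then p else zs ! (i - 1))"
  unfolding gp_def ch_def by (cases i) (auto simp: nth_append)

lemma Z_iff:
  assumes len: "length zs = 2 * n" and n: "1 \<le> n"
  shows "((\<lambda>j. zs ! (j - 1)) \<in> Zset n a) = chok a 0 zs"
proof
  assume Z: "(\<lambda>j. zs ! (j - 1)) \<in> Zset n a"
  show "chok a 0 zs" unfolding chok_def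
  proof (intro allI impI)
    fix i assume i: "i < Suc (length zs)"
    consider "i = 0" | "i = 2 * n" | "0 < i" "i < 2 * n" using i len by linarith
    then show "a \<le> gp 0 zs i"
    proof cases
      case 1 then show ?thesis using Z len n by (simp add: gp_val Zset_def)
    next
      case 2 then show ?thesis using Z len n by (simp add: gp_val Zset_def)
    next
      case 3
      then have "Suc i \<in> {2..2*n}" by auto
      then have "zs ! (Suc i - 1) - zs ! (Suc i - 1 - 1) \<ge> a" using Z unfolding Zset_def by blast
      then show ?thesis using 3 len by (simp add: gp_val)
    qed
  qed
next
  assume C: "chok a 0 zs"
  have g: "a \<le> gp 0 zs i" if "i \<le> 2 * n" for i using C that len unfolding chok_def by auto
  show "(\<lambda>j. zs ! (j - 1)) \<in> Zset n a" unfolding Zset_def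
  proof (intro CollectI conjI ballI)
    show "a \<le> zs ! (1 - 1)" using g[of 0] len n by (simp add: gp_val)
    show "a \<le> 1 - zs ! (2 * n - 1)" using g[of "2*n"] len n by (simp add: gp_val)
    fix j assume j: "j \<in> {2..2*n}"
    have "a \<le> gp 0 zs (j - 1)" using g[of "j - 1"] j by auto
    moreover have "gp 0 zs (j - 1) = zs ! (j - 1) - zs ! (j - 1 - 1)"
      using gp_val[of "j - 1" zs 0] j len by auto
    ultimately show "a \<le> zs ! (j - 1) - zs ! (j - 1 - 1)" by simp
  qed
qed

lemma sort_mset_eq: "mset xs = mset ys \<Longrightarrow> sort xs = sort ys"
  by (rule properties_for_sort) simp_all



lemma inv_sqrt_le: "0 < u \<Longrightarrow> u \<le> 1 \<Longrightarrow> 1 / sqrt u \<le> 1 / u"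
proof -
  assume u: "0 < u" "u \<le> 1"
  have "u * u \<le> 1 * u" using u by (intro mult_right_mono) auto
  then have "u\<^sup>2 \<le> u" by (simp add: power2_eq_square)
  then have "u \<le> sqrt u" by (rule real_le_rsqrt)
  then show ?thesis using u by (intro divide_left_mono) auto
qed

lemma part1_pw:
  assumes s: "sorted zs" and len: "length zs = 2 * n" and n: "1 \<le> n" and a: "0 < a"
    and t: "t = (\<lambda>j. zs ! (j - 1))"
  shows "indicator (Zset n a) t / sqrt (t 1 * (1 - t (2 * n))) * (\<Prod>i\<in>{2..2 * n}. 1 / (t i - t (i - 1)))
     \<le> cw a 0 zs"
proof (cases "t \<in> Zset n a")
  case False
  then show ?thesis using cw_nonneg[OF a] by simp
next
  case True
  then have C: "chok a 0 zs" using Z_iff[OF len n] t by simp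
  define g where "g = gp 0 zs"
  have g: "a \<le> g i" if "i \<le> 2 * n" for i using C that len unfolding chok_def g_def by auto
  define m' where "m' = 2 * n - 1"
  have m': "2 * n = Suc m'" using n unfolding m'_def by simp
  have g0: "g 0 = t 1" unfolding g_def t using len n by (simp add: gp_val)
  have gm: "g (2 * n) = 1 - t (2 * n)" unfolding g_def t using len n by (simp add: gp_val)
  have gi: "g (Suc i) = t (i + 2) - t (i + 1)" if "i < m'" for i
    unfolding g_def t using len that m' by (simp add: gp_val)
  have P: "(\<Prod>i\<in>{2..2 * n}. 1 / (t i - t (i - 1))) = (\<Prod>i<m'. 1 / g (Suc i))"
  proof -
    have "{2..2 * n} = (\<lambda>i. i + 2) ` {..<m'}"
    proof (intro set_eqI iffI)
      fix x assume "x \<in> {2..2 * n}"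
      then have "x = (x - 2) + 2" "x - 2 \<in> {..<m'}" using m' by auto
      then show "x \<in> (\<lambda>i. i + 2) ` {..<m'}" by blast
    qed (use m' in auto)
    then have "(\<Prod>i\<in>{2..2 * n}. 1 / (t i - t (i - 1))) = (\<Prod>i<m'. 1 / (t (i + 2) - t (i + 2 - 1)))"
      by (simp add: prod.reindex inj_on_def)
    also have "\<dots> = (\<Prod>i<m'. 1 / g (Suc i))"
      by (intro prod.cong refl) (simp add: gi numeral_2_eq_2)
    finally show ?thesis .
  qed
  have cwe: "cw a 0 zs = (1 / g 0 * (\<Prod>i<m'. 1 / g (Suc i))) * (1 / g (2 * n))"
  proof -
    have "cw a 0 zs = (\<Prod>i<Suc (Suc m'). 1 / g i)" using C len m' unfolding cw_def g_def by simp
    also have "\<dots> = (\<Prod>i<Suc m'. 1 / g i) * (1 / g (Suc m'))" by (rule prod.lessThan_Suc)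
    also have "(\<Prod>i<Suc m'. 1 / g i) = 1 / g 0 * (\<Prod>i<m'. 1 / g (Suc i))" by (rule prod.lessThan_Suc_shift)
    finally show ?thesis using m' by simp
  qed
  have Pnn: "0 \<le> (\<Prod>i<m'. 1 / g (Suc i))"
  proof (intro prod_nonneg)
    fix i assume "i \<in> {..<m'}"
    then have "a \<le> g (Suc i)" using g m' by auto
    then show "0 \<le> 1 / g (Suc i)" using a by simp
  qed
  have s0: "zs ! 0 \<le> zs ! (2 * n - 1)" using s len n by (intro sorted_nth_mono) auto
  have pos0: "0 < g 0" "0 < g (2 * n)" using g[of 0] g[of "2*n"] a by auto
  have le1: "g 0 \<le> 1" "g (2 * n) \<le> 1" using s0 pos0 unfolding g0 gm t by auto
  define u where "u = g 0 * g (2 * n)"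
  have u: "0 < u" "u \<le> 1" unfolding u_def using pos0 le1 by (auto intro: mult_le_one)
  have "indicator (Zset n a) t / sqrt (t 1 * (1 - t (2 * n))) * (\<Prod>i\<in>{2..2 * n}. 1 / (t i - t (i - 1)))
      = 1 / sqrt u * (\<Prod>i<m'. 1 / g (Suc i))" using True unfolding P u_def g0 gm by simp
  also have "\<dots> \<le> 1 / u * (\<Prod>i<m'. 1 / g (Suc i))"
    using inv_sqrt_le[OF u] Pnn by (rule mult_right_mono)
  also have "\<dots> = cw a 0 zs" unfolding cwe u_def by (simp add: field_simps)
  finally show ?thesis .
qed

lemma V_swap: "V a K M (xs @ ys) = V a K M (ys @ xs)"
  unfolding V_def by (subst sort_mset_eq[of "xs @ ys" "ys @ xs"]) (auto simp: add.commute)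

lemma part1:
  assumes n: "1 \<le> n" and a: "0 < a" "a \<le> 1"
  shows "(\<integral>\<^sup>+ rs \<in> Delta n \<times> Delta n.
        ennreal (indicator (Zset n a) (tpts n (fst rs) (snd rs))
          / sqrt (tpts n (fst rs) (snd rs) 1 * (1 - tpts n (fst rs) (snd rs) (2*n)))
          * (\<Prod>i\<in>{2..2*n}. 1 / (tpts n (fst rs) (snd rs) i - tpts n (fst rs) (snd rs) (i - 1))))
      \<partial>(PiM {1..n} (\<lambda>_. lborel) \<Otimes>\<^sub>M PiM {1..n} (\<lambda>_. lborel)))
      \<le> ennreal ((2 * real (2 * n) * ln (1 / a)) ^ (2 * n))"
proof -
  interpret product_sigma_finite "\<lambda>_::nat. lborel :: real measure" by standard
  define K where "K = 2 * real (2 * n) * ln (1 / a)"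
  have K: "2 * real (2 * n) * ln (1 / a) \<le> K" unfolding K_def by simp
  have pw: "ennreal (indicator (Zset n a) (tpts n r s)
          / sqrt (tpts n r s 1 * (1 - tpts n r s (2*n)))
          * (\<Prod>i\<in>{2..2*n}. 1 / (tpts n r s i - tpts n r s (i - 1))))
      \<le> V a K (2 * n) (lst n r @ lst n s)" for r s
  proof -
    define zs where "zs = sort (map r [1..<Suc n] @ map s [1..<Suc n])"
    have t: "tpts n r s = (\<lambda>j. zs ! (j - 1))" unfolding zs_def tpts_def by (simp add: fun_eq_iff)
    have so: "sort (lst n r @ lst n s) = zs" unfolding zs_def by (rule sort_mset_eq) (simp add: mset_lst)
    have len: "length zs = 2 * n" unfolding zs_def by simp
    have "indicator (Zset n a) (tpts n r s)
          / sqrt (tpts n r s 1 * (1 - tpts n r s (2*n)))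
          * (\<Prod>i\<in>{2..2*n}. 1 / (tpts n r s i - tpts n r s (i - 1))) \<le> cw a 0 zs"
      by (rule part1_pw[OF _ len n a(1) t]) (simp add: zs_def)
    then show ?thesis unfolding V_def so by (simp add: ennreal_leI)
  qed
  have "(\<integral>\<^sup>+ rs \<in> Delta n \<times> Delta n.
        ennreal (indicator (Zset n a) (tpts n (fst rs) (snd rs))
          / sqrt (tpts n (fst rs) (snd rs) 1 * (1 - tpts n (fst rs) (snd rs) (2*n)))
          * (\<Prod>i\<in>{2..2*n}. 1 / (tpts n (fst rs) (snd rs) i - tpts n (fst rs) (snd rs) (i - 1))))
      \<partial>(PiM {1..n} (\<lambda>_. lborel) \<Otimes>\<^sub>M PiM {1..n} (\<lambda>_. lborel)))
      \<le> (\<integral>\<^sup>+ rs. V a K (2 * n) (lst n (fst rs) @ lst n (snd rs))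
      \<partial>(PiM {1..n} (\<lambda>_. lborel) \<Otimes>\<^sub>M PiM {1..n} (\<lambda>_. lborel)))"
  proof (intro nn_integral_mono)
    fix rs :: "(nat \<Rightarrow> real) \<times> (nat \<Rightarrow> real)"
    show "ennreal (indicator (Zset n a) (tpts n (fst rs) (snd rs))
          / sqrt (tpts n (fst rs) (snd rs) 1 * (1 - tpts n (fst rs) (snd rs) (2*n)))
          * (\<Prod>i\<in>{2..2*n}. 1 / (tpts n (fst rs) (snd rs) i - tpts n (fst rs) (snd rs) (i - 1)))) *
          indicator (Delta n \<times> Delta n) rs \<le> V a K (2 * n) (lst n (fst rs) @ lst n (snd rs))"
      using pw[of "fst rs" "snd rs"] by (auto simp: indicator_def)
  qed
  also have "\<dots> \<le> (\<integral>\<^sup>+ r. \<integral>\<^sup>+ s. V a K (2 * n) (lst n r @ lst n s) \<partial>PiM {1..n} (\<lambda>_. lborel) \<partial>PiM {1..n} (\<lambda>_. lborel))"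
    using lower_pair[OF sigma_finite[of "{1..n}"], of "PiM {1..n} (\<lambda>_. lborel)" "\<lambda>rs. V a K (2 * n) (lst n (fst rs) @ lst n (snd rs))"]
    by simp
  also have "\<dots> = (\<integral>\<^sup>+ r. \<integral>\<^sup>+ s. V a K (2 * n) (lst n s @ lst n r) \<partial>PiM {1..n} (\<lambda>_. lborel) \<partial>PiM {1..n} (\<lambda>_. lborel))"
    by (simp add: V_swap)
  also have "\<dots> \<le> (\<integral>\<^sup>+ r. V a K (2 * n) (lst n r) \<partial>PiM {1..n} (\<lambda>_. lborel))"
  proof (rule nn_integral_mono)
    fix r show "(\<integral>\<^sup>+ s. V a K (2 * n) (lst n s @ lst n r) \<partial>PiM {1..n} (\<lambda>_. lborel)) \<le> V a K (2 * n) (lst n r)"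
      by (rule V_PiM[OF a K]) simp
  qed
  also have "\<dots> = (\<integral>\<^sup>+ r. V a K (2 * n) (lst n r @ []) \<partial>PiM {1..n} (\<lambda>_. lborel))"
    by simp
  also have "\<dots> \<le> V a K (2 * n) []"
    by (rule V_PiM[OF a K]) simp
  also have "\<dots> = ennreal (K ^ (2 * n))" unfolding V_def using a by simp
  finally show ?thesis unfolding K_def .
qed



lemma ins_bad:
  assumes "chok a p zs" "\<not> chok a p (insort y zs)" "p \<le> y" "y \<le> 1"
  shows "\<bar>y - p\<bar> < a \<or> \<bar>y - 1\<bar> < a \<or> (\<exists>x\<in>set zs. \<bar>y - x\<bar> < a)"
  using assms
proof (induction zs arbitrary: p)
  case Nil
  then show ?case by auto
next
  case (Cons z zs)
  show ?case
  proof (cases "y \<le> z")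
    case True
    then show ?thesis using Cons.prems by auto
  next
    case False
    then have "chok a z zs" "\<not> chok a z (insort y zs)" using Cons.prems by auto
    from Cons.IH[OF this] False Cons.prems(4) show ?thesis by auto
  qed
qed

definition I01 :: "real list \<Rightarrow> bool" where "I01 xs = (\<forall>x\<in>set xs. 0 \<le> x \<and> x \<le> 1)"
definition Bd :: "real \<Rightarrow> real list \<Rightarrow> bool" where "Bd a xs = (I01 xs \<and> \<not> chok a 0 (sort xs))"
definition cc :: "real \<Rightarrow> nat \<Rightarrow> nat \<Rightarrow> real" where "cc a M m = 2 * a * real (M + 2) * real (M - m)"
definition E :: "real \<Rightarrow> nat \<Rightarrow> real list \<Rightarrow> ennreal" where
  "E a M xs = (if Bd a xs then 1 else 0) + ennreal (cc a M (length xs)) * (if I01 xs then 1 else 0)"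

lemma E_swap: "E a M (xs @ ys) = E a M (ys @ xs)"
  unfolding E_def Bd_def I01_def by (subst sort_mset_eq[of "xs @ ys" "ys @ xs"]) (auto simp: add.commute)

lemma E_pw:
  assumes a: "0 < a"
  shows "E a M (y # xs) \<le> (if Bd a xs then 1 else 0) * indicator {0..1} y
     + (if I01 xs then 1 else 0) * (indicator {-a<..<a} y + indicator {1-a<..<1+a} y
         + (\<Sum>i<length xs. indicator {xs ! i - a<..<xs ! i + a} y))
     + ennreal (cc a M (Suc (length xs))) * (if I01 xs then 1 else 0) * indicator {0..1} y"
proof -
  have I: "I01 (y # xs) = (I01 xs \<and> 0 \<le> y \<and> y \<le> 1)" unfolding I01_def by auto
  have B: "(if Bd a (y # xs) then 1 else 0) \<le> (if Bd a xs then 1 else 0) * indicator {0..1} y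
     + (if I01 xs then 1 else 0) * (indicator {-a<..<a} y + indicator {1-a<..<1+a} y
         + (\<Sum>i<length xs. indicator {xs ! i - a<..<xs ! i + a} y) :: ennreal)"
  proof (cases "Bd a (y # xs)")
    case True
    then have y: "0 \<le> y" "y \<le> 1" and Ix: "I01 xs" and nc: "\<not> chok a 0 (insort y (sort xs))"
      unfolding Bd_def I by auto
    show ?thesis
    proof (cases "Bd a xs")
      case True
      then show ?thesis using y by (simp add: indicator_def)
    next
      case False
      then have "chok a 0 (sort xs)" using Ix unfolding Bd_def by auto
      from ins_bad[OF this nc y] have
        "\<bar>y - 0\<bar> < a \<or> \<bar>y - 1\<bar> < a \<or> (\<exists>x\<in>set (sort xs). \<bar>y - x\<bar> < a)" .
      then consider "\<bar>y\<bar> < a" | "\<bar>y - 1\<bar> < a" | i where "i < length xs" "\<bar>y - xs ! i\<bar> < a"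
        by (auto simp: in_set_conv_nth)
      then have "1 \<le> indicator {-a<..<a} y + indicator {1-a<..<1+a} y
         + (\<Sum>i<length xs. indicator {xs ! i - a<..<xs ! i + a} y :: ennreal)"
      proof cases
        case 1 then show ?thesis by (auto simp: indicator_def abs_less_iff)
      next
        case 2 then show ?thesis by (auto simp: indicator_def abs_less_iff)
      next
        case 3
        then have "1 \<le> (\<Sum>i<length xs. indicator {xs ! i - a<..<xs ! i + a} y :: ennreal)"
          using member_le_sum[of i "{..<length xs}" "\<lambda>i. indicator {xs ! i - a<..<xs ! i + a} y :: ennreal"]
          by (auto simp: indicator_def abs_less_iff)
        then show ?thesis by (simp add: add_increasing)
      qed
      then show ?thesis using Ix by (simp add: add_increasing)
    qed
  qed simp
  have eq: "ennreal (cc a M (length (y # xs))) * (if I01 (y # xs) then 1 else 0)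
      = ennreal (cc a M (Suc (length xs))) * (if I01 xs then 1 else 0) * indicator {0..1} y"
    unfolding I by (simp add: indicator_def)
  have Eeq: "E a M (y # xs) = (if Bd a (y # xs) then 1 else 0)
      + ennreal (cc a M (Suc (length xs))) * (if I01 xs then 1 else 0) * indicator {0..1} y"
    unfolding E_def eq[symmetric] by simp
  show ?thesis unfolding Eeq by (rule add_mono[OF B order_refl])
qed

lemma int_ioo: "u \<le> v \<Longrightarrow> (\<integral>\<^sup>+y. indicator {u<..<v} y \<partial>lborel) = ennreal (v - u)"
  by simp

lemma E_step:
  assumes a: "0 < a" and len: "length xs < M"
  shows "(\<integral>\<^sup>+y. E a M (y # xs) \<partial>lborel) \<le> E a M xs"
proof -
  define B0 :: ennreal where "B0 = (if Bd a xs then 1 else 0)"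
  define I0 :: ennreal where "I0 = (if I01 xs then 1 else 0)"
  define c' where "c' = ennreal (cc a M (Suc (length xs)))"
  define S where "S y = (indicator {-a<..<a} y + indicator {1-a<..<1+a} y
         + (\<Sum>i<length xs. indicator {xs ! i - a<..<xs ! i + a} y) :: ennreal)" for y
  have mS: "S \<in> borel_measurable lborel" unfolding S_def by measurable
  have iS: "(\<integral>\<^sup>+y. S y \<partial>lborel) = ennreal (2 * a) + ennreal (2 * a) + (\<Sum>i<length xs. ennreal (2 * a))"
  proof -
    have "(\<integral>\<^sup>+y. S y \<partial>lborel) = (\<integral>\<^sup>+y. indicator {-a<..<a} y \<partial>lborel) + (\<integral>\<^sup>+y. indicator {1-a<..<1+a} y \<partial>lborel)
       + (\<Sum>i<length xs. (\<integral>\<^sup>+y. indicator {xs ! i - a<..<xs ! i + a} y \<partial>lborel))"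
      unfolding S_def by (simp add: nn_integral_add nn_integral_sum)
    also have "\<dots> = ennreal (2 * a) + ennreal (2 * a) + (\<Sum>i<length xs. ennreal (2 * a))"
      using a by (simp add: int_ioo)
    finally show ?thesis .
  qed
  have "(\<integral>\<^sup>+y. E a M (y # xs) \<partial>lborel) \<le> (\<integral>\<^sup>+y. B0 * indicator {0..1} y + I0 * S y + c' * I0 * indicator {0..1} y \<partial>lborel)"
    unfolding B0_def I0_def c'_def S_def using E_pw[OF a] by (intro nn_integral_mono) auto
  also have "\<dots> = B0 + I0 * (ennreal (2 * a) + ennreal (2 * a) + (\<Sum>i<length xs. ennreal (2 * a))) + c' * I0"
  proof -
    have i01: "integral\<^sup>N lborel (indicator {0..1::real}) = 1"
      by (subst nn_integral_indicator) auto
    have m1: "(\<lambda>y. B0 * indicator {0..1::real} y) \<in> borel_measurable lborel" by measurable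
    have m2: "(\<lambda>y. I0 * S y) \<in> borel_measurable lborel" using mS by measurable
    have m3: "(\<lambda>y. c' * I0 * indicator {0..1::real} y) \<in> borel_measurable lborel" by measurable
    have "(\<integral>\<^sup>+y. B0 * indicator {0..1} y + I0 * S y + c' * I0 * indicator {0..1} y \<partial>lborel)
       = (\<integral>\<^sup>+y. B0 * indicator {0..1::real} y \<partial>lborel) + (\<integral>\<^sup>+y. I0 * S y \<partial>lborel) + (\<integral>\<^sup>+y. c' * I0 * indicator {0..1::real} y \<partial>lborel)"
    proof -
      have m12: "(\<lambda>y. B0 * indicator {0..1::real} y + I0 * S y) \<in> borel_measurable lborel"
        using m1 m2 by (rule borel_measurable_add)
      show ?thesis
        by (subst nn_integral_add[OF m12 m3], subst nn_integral_add[OF m1 m2]) (rule refl)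
    qed
    also have "\<dots> = B0 * integral\<^sup>N lborel (indicator {0..1::real}) + I0 * (\<integral>\<^sup>+y. S y \<partial>lborel) + c' * I0 * integral\<^sup>N lborel (indicator {0..1::real})"
    proof -
      have "(\<integral>\<^sup>+y. B0 * indicator {0..1::real} y \<partial>lborel) = B0 * integral\<^sup>N lborel (indicator {0..1::real})"
        by (rule nn_integral_cmult) measurable
      moreover have "(\<integral>\<^sup>+y. I0 * S y \<partial>lborel) = I0 * (\<integral>\<^sup>+y. S y \<partial>lborel)"
        using nn_integral_cmult[OF mS, of I0] by simp
      moreover have "(\<integral>\<^sup>+y. c' * I0 * indicator {0..1::real} y \<partial>lborel) = c' * I0 * integral\<^sup>N lborel (indicator {0..1::real})"
        by (rule nn_integral_cmult) measurable
      ultimately show ?thesis by (rule arg_cong3[where f = "\<lambda>x y z. x + y + z"])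
    qed
    finally show ?thesis unfolding iS i01 by simp
  qed
  also have "\<dots> \<le> E a M xs"
  proof (cases "I01 xs")
    case False
    then show ?thesis unfolding E_def B0_def I0_def by simp
  next
    case True
    have r: "2 * a + 2 * a + real (length xs) * (2 * a) + cc a M (Suc (length xs)) \<le> cc a M (length xs)"
    proof -
      have "cc a M (length xs) = cc a M (Suc (length xs)) + 2 * a * real (M + 2)"
        unfolding cc_def using len by (simp add: of_nat_diff algebra_simps)
      moreover have "2 * a + 2 * a + real (length xs) * (2 * a) \<le> 2 * a * real (M + 2)"
      proof -
        have "real (length xs) + 2 \<le> real (M + 2)" using len by simp
        then have "2 * a * (real (length xs) + 2) \<le> 2 * a * real (M + 2)"
          using a by (intro mult_left_mono) auto
        then show ?thesis by (simp add: algebra_simps)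
      qed
      ultimately show ?thesis by simp
    qed
    have "ennreal (2 * a) + ennreal (2 * a) + (\<Sum>i<length xs. ennreal (2 * a)) + c'
        = ennreal (2 * a + 2 * a + real (length xs) * (2 * a) + cc a M (Suc (length xs)))"
    proof -
      have s1: "(\<Sum>i<length xs. ennreal (2 * a)) = ennreal (real (length xs) * (2 * a))"
        using a by (simp add: ennreal_mult ennreal_of_nat_eq_real_of_nat)
      have ccn: "0 \<le> cc a M (Suc (length xs))" unfolding cc_def using a by simp
      show ?thesis unfolding c'_def s1 using a ccn
        by (simp only: ennreal_plus[symmetric] add_nonneg_nonneg mult_nonneg_nonneg of_nat_0_le_iff
            order_less_imp_le zero_le_numeral mult_pos_pos)
    qed
    also have "\<dots> \<le> ennreal (cc a M (length xs))" using r by (rule ennreal_leI)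
    finally show ?thesis using True unfolding E_def B0_def I0_def by (simp add: add.assoc)
  qed
  finally show ?thesis .
qed

lemma E_PiM:
  assumes a: "0 < a"
  shows "length L + k \<le> M \<Longrightarrow> (\<integral>\<^sup>+x. E a M (lst k x @ L) \<partial>(Pi\<^sub>M {1..k} (\<lambda>_. lborel))) \<le> E a M L"
proof (induction k)
  case 0
  then show ?case by (simp add: PiM_empty nn_integral_count_space_finite)
next
  case (Suc k)
  have eq: "{1..Suc k} = insert (Suc k) {1..k}" by auto
  have "(\<integral>\<^sup>+x. E a M (lst (Suc k) x @ L) \<partial>(Pi\<^sub>M {1..Suc k} (\<lambda>_. lborel)))
      \<le> (\<integral>\<^sup>+x. (\<integral>\<^sup>+y. E a M (lst (Suc k) (x(Suc k := y)) @ L) \<partial>lborel) \<partial>(Pi\<^sub>M {1..k} (\<lambda>_. lborel)))"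
    unfolding eq by (rule lower_insert) auto
  also have "\<dots> = (\<integral>\<^sup>+x. (\<integral>\<^sup>+y. E a M (y # (lst k x @ L)) \<partial>lborel) \<partial>(Pi\<^sub>M {1..k} (\<lambda>_. lborel)))"
    by (simp add: lst_upd)
  also have "\<dots> \<le> (\<integral>\<^sup>+x. E a M (lst k x @ L) \<partial>(Pi\<^sub>M {1..k} (\<lambda>_. lborel)))"
    using Suc.prems by (intro nn_integral_mono E_step[OF a]) auto
  also have "\<dots> \<le> E a M L" using Suc by auto
  finally show ?case .
qed

lemma set_lst: "set (lst k x) = x ` {1..k}"
  by (induction k) (auto simp: atLeastAtMostSuc_conv)

lemma part2:
  assumes n: "1 \<le> n" and a: "0 < a" "a \<le> 1"
  shows "(\<integral>\<^sup>+ rs \<in> Delta n \<times> Delta n.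
        ennreal (indicator (- Zset n a) (tpts n (fst rs) (snd rs)))
      \<partial>(PiM {1..n} (\<lambda>_. lborel) \<Otimes>\<^sub>M PiM {1..n} (\<lambda>_. lborel)))
      \<le> ennreal (cc a (2 * n) 0)"
proof -
  interpret product_sigma_finite "\<lambda>_::nat. lborel :: real measure" by standard
  have pw: "ennreal (indicator (- Zset n a) (tpts n r s)) * indicator (Delta n \<times> Delta n) (r, s)
      \<le> E a (2 * n) (lst n r @ lst n s)" for r s
  proof (cases "(r, s) \<in> Delta n \<times> Delta n \<and> tpts n r s \<notin> Zset n a")
    case True
    define zs where "zs = sort (map r [1..<Suc n] @ map s [1..<Suc n])"
    have t: "tpts n r s = (\<lambda>j. zs ! (j - 1))" unfolding zs_def tpts_def by (simp add: fun_eq_iff)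
    have so: "sort (lst n r @ lst n s) = zs" unfolding zs_def by (rule sort_mset_eq) (simp add: mset_lst)
    have len: "length zs = 2 * n" unfolding zs_def by simp
    have nc: "\<not> chok a 0 zs" using True Z_iff[OF len n, of a] t by simp
    have I: "I01 (lst n r @ lst n s)" using True by (auto simp: I01_def set_lst Delta_def)
    have "Bd a (lst n r @ lst n s)" unfolding Bd_def so using nc I by simp
    then show ?thesis unfolding E_def by (simp add: indicator_def)
  next
    case False
    then show ?thesis by (auto simp: indicator_def)
  qed
  have "(\<integral>\<^sup>+ rs \<in> Delta n \<times> Delta n.
        ennreal (indicator (- Zset n a) (tpts n (fst rs) (snd rs)))
      \<partial>(PiM {1..n} (\<lambda>_. lborel) \<Otimes>\<^sub>M PiM {1..n} (\<lambda>_. lborel)))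
      \<le> (\<integral>\<^sup>+ rs. E a (2 * n) (lst n (fst rs) @ lst n (snd rs))
      \<partial>(PiM {1..n} (\<lambda>_. lborel) \<Otimes>\<^sub>M PiM {1..n} (\<lambda>_. lborel)))"
  proof (intro nn_integral_mono)
    fix rs :: "(nat \<Rightarrow> real) \<times> (nat \<Rightarrow> real)"
    show "ennreal (indicator (- Zset n a) (tpts n (fst rs) (snd rs))) * indicator (Delta n \<times> Delta n) rs
        \<le> E a (2 * n) (lst n (fst rs) @ lst n (snd rs))"
      using pw[of "fst rs" "snd rs"] by simp
  qed
  also have "\<dots> \<le> (\<integral>\<^sup>+ r. \<integral>\<^sup>+ s. E a (2 * n) (lst n r @ lst n s) \<partial>PiM {1..n} (\<lambda>_. lborel) \<partial>PiM {1..n} (\<lambda>_. lborel))"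
    using lower_pair[OF sigma_finite[of "{1..n}"], of "PiM {1..n} (\<lambda>_. lborel)" "\<lambda>rs. E a (2 * n) (lst n (fst rs) @ lst n (snd rs))"]
    by simp
  also have "\<dots> = (\<integral>\<^sup>+ r. \<integral>\<^sup>+ s. E a (2 * n) (lst n s @ lst n r) \<partial>PiM {1..n} (\<lambda>_. lborel) \<partial>PiM {1..n} (\<lambda>_. lborel))"
    by (simp add: E_swap)
  also have "\<dots> \<le> (\<integral>\<^sup>+ r. E a (2 * n) (lst n r) \<partial>PiM {1..n} (\<lambda>_. lborel))"
  proof (rule nn_integral_mono)
    fix r show "(\<integral>\<^sup>+ s. E a (2 * n) (lst n s @ lst n r) \<partial>PiM {1..n} (\<lambda>_. lborel)) \<le> E a (2 * n) (lst n r)"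
      by (rule E_PiM[OF a(1)]) simp
  qed
  also have "\<dots> = (\<integral>\<^sup>+ r. E a (2 * n) (lst n r @ []) \<partial>PiM {1..n} (\<lambda>_. lborel))"
    by simp
  also have "\<dots> \<le> E a (2 * n) []"
    by (rule E_PiM[OF a(1)]) simp
  also have "\<dots> = ennreal (cc a (2 * n) 0)" unfolding E_def Bd_def I01_def using a by simp
  finally show ?thesis .
qed

theorem mainTheorem10:
  fixes n :: nat
  assumes "n \<ge> 2"
  shows "\<exists>C::real. C > 0 \<and> (\<forall>a::real. 0 < a \<and> a < exp (-1) \<longrightarrow>
    (\<integral>\<^sup>+ rs \<in> Delta n \<times> Delta n.
        ennreal (indicator (Zset n a) (tpts n (fst rs) (snd rs))
          / sqrt (tpts n (fst rs) (snd rs) 1 * (1 - tpts n (fst rs) (snd rs) (2*n)))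
          * (\<Prod>i\<in>{2..2*n}. 1 / (tpts n (fst rs) (snd rs) i - tpts n (fst rs) (snd rs) (i - 1))))
      \<partial>(PiM {1..n} (\<lambda>_. lborel) \<Otimes>\<^sub>M PiM {1..n} (\<lambda>_. lborel)))
      \<le> ennreal (C * \<bar>ln a\<bar> powr C)
    \<and>
    (\<integral>\<^sup>+ rs \<in> Delta n \<times> Delta n.
        ennreal (indicator (- Zset n a) (tpts n (fst rs) (snd rs)))
      \<partial>(PiM {1..n} (\<lambda>_. lborel) \<Otimes>\<^sub>M PiM {1..n} (\<lambda>_. lborel)))
      \<le> ennreal (C * a))"
proof -
  have n: "1 \<le> n" using assms by simp
  define C :: real where "C = real ((4 * n) ^ (2 * n)) + 8 * real (n + 1) * real n"
  have P: "real (2 * n) \<le> real ((4 * n) ^ (2 * n))"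
  proof -
    have "real (4 * n) \<le> real (4 * n) ^ (2 * n)" using n by (intro self_le_power) auto
    then show ?thesis by simp
  qed
  have C0: "0 < C" unfolding C_def using n by (intro add_nonneg_pos) auto
  have C1: "real ((4 * n) ^ (2 * n)) \<le> C" "8 * real (n + 1) * real n \<le> C" unfolding C_def by auto
  have C2: "real (2 * n) \<le> C" using P C1 by linarith
  show ?thesis
  proof (intro exI[of _ C] conjI C0 allI impI)
    fix a :: real assume a: "0 < a \<and> a < exp (- 1)"
    have a1: "a \<le> 1" using a by (smt (verit) exp_le_one_iff)
    have lna: "ln a < -1" using a by (metis exp_less_cancel_iff exp_ln)
    define L where "L = \<bar>ln a\<bar>"
    have L1: "1 \<le> L" unfolding L_def using lna by simp
    have lnL: "ln (1 / a) = L" unfolding L_def using a lna by (simp add: ln_div)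
    have "(2 * real (2 * n) * ln (1 / a)) ^ (2 * n) = real ((4 * n) ^ (2 * n)) * L ^ (2 * n)"
      unfolding lnL by (simp add: power_mult_distrib)
    also have "\<dots> \<le> C * L powr C"
    proof (rule mult_mono)
      have "L ^ (2 * n) = L powr real (2 * n)" using L1 by (subst powr_realpow) auto
      also have "\<dots> \<le> L powr C" using L1 C2 by (intro powr_mono) auto
      finally show "L ^ (2 * n) \<le> L powr C" .
    qed (use C0 C1 L1 in auto)
    finally have b1: "(2 * real (2 * n) * ln (1 / a)) ^ (2 * n) \<le> C * \<bar>ln a\<bar> powr C" unfolding L_def .
    show "(\<integral>\<^sup>+ rs \<in> Delta n \<times> Delta n.
        ennreal (indicator (Zset n a) (tpts n (fst rs) (snd rs))
          / sqrt (tpts n (fst rs) (snd rs) 1 * (1 - tpts n (fst rs) (snd rs) (2*n)))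
          * (\<Prod>i\<in>{2..2*n}. 1 / (tpts n (fst rs) (snd rs) i - tpts n (fst rs) (snd rs) (i - 1))))
      \<partial>(PiM {1..n} (\<lambda>_. lborel) \<Otimes>\<^sub>M PiM {1..n} (\<lambda>_. lborel)))
      \<le> ennreal (C * \<bar>ln a\<bar> powr C)"
      using part1[OF n _ a1] a b1 by (meson ennreal_leI order_trans)
    have b2: "cc a (2 * n) 0 \<le> C * a"
    proof -
      have "cc a (2 * n) 0 = 8 * real (n + 1) * real n * a" unfolding cc_def by (simp add: algebra_simps)
      also have "\<dots> \<le> C * a" using C1 a by (intro mult_right_mono) auto
      finally show ?thesis .
    qed
    show "(\<integral>\<^sup>+ rs \<in> Delta n \<times> Delta n.
        ennreal (indicator (- Zset n a) (tpts n (fst rs) (snd rs)))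
      \<partial>(PiM {1..n} (\<lambda>_. lborel) \<Otimes>\<^sub>M PiM {1..n} (\<lambda>_. lborel)))
      \<le> ennreal (C * a)"
      using part2[OF n _ a1] a b2 by (meson ennreal_leI order_trans)
  qed
qed

end
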